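(* For every non-binary phylogenetic tree $T$ with $n$ leaves there exists a binary phylogenetic tree $T'$ with $n$ leaves such that $\Phi(T')>\Phi(T)$.
   Context: A phylogenetic tree with $n$ leaves is a rooted tree whose leaves are bijectively labeled by $\{1,\dots,n\}$, every internal node having at least two children; it is binary if every internal node has exactly two children. The depth $\delta_T(v)$ is the number of arcs from the root to $v$; for leaves $i,j$, $\varphi_T(i,j)=\delta_T(LCA_T(i,j))$ ($LCA$ = lowest common ancestor), and $\Phi(T)=\sum_{1\le i<j\le n}\varphi_T(i,j)$ is the total cophenetic index. *)

theory Defs
  imports Main
begin

datatype ptree = Leaf nat | Node "ptree list"

fun leaf_list :: "ptree \<Rightarrow> nat list" where
  "leaf_list (Leaf i) = [i]"
| "leaf_list (Node ts) = concat (map leaf_list ts)"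

fun internal_ok :: "ptree \<Rightarrow> bool" where
  "internal_ok (Leaf i) = True"
| "internal_ok (Node ts) = (2 \<le> length ts \<and> (\<forall>t\<in>set ts. internal_ok t))"

fun binary :: "ptree \<Rightarrow> bool" where
  "binary (Leaf i) = True"
| "binary (Node ts) = (length ts = 2 \<and> (\<forall>t\<in>set ts. binary t))"

definition phylogenetic :: "nat \<Rightarrow> ptree \<Rightarrow> bool" where
  "phylogenetic n T \<longleftrightarrow> internal_ok T \<and> distinct (leaf_list T) \<and> set (leaf_list T) = {1..n}"

fun nodes :: "ptree \<Rightarrow> (ptree \<times> nat) set" where
  "nodes (Leaf i) = {(Leaf i, 0)}"
| "nodes (Node ts) = insert (Node ts, 0) (\<Union>t\<in>set ts. (\<lambda>(s, d). (s, Suc d)) ` nodes t)"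

text \<open>Depth of the lowest common ancestor of leaves i and j: the largest depth of a
  node whose subtree contains both leaves.\<close>
definition phi :: "ptree \<Rightarrow> nat \<Rightarrow> nat \<Rightarrow> nat" where
  "phi T i j = Max {d. \<exists>s. (s, d) \<in> nodes T \<and> i \<in> set (leaf_list s) \<and> j \<in> set (leaf_list s)}"

definition Phi :: "nat \<Rightarrow> ptree \<Rightarrow> nat" where
  "Phi n T = (\<Sum>(i, j)\<in>{(i, j). 1 \<le> i \<and> i < j \<and> j \<le> n}. phi T i j)"

end

theory Submission
  imports Defs
begin

fun phir :: "ptree \<Rightarrow> nat \<Rightarrow> nat \<Rightarrow> nat" where
  "phir (Leaf k) i j = 0"
| "phir (Node ts) i j = Max (set (0 # map (\<lambda>t. if i \<in> set (leaf_list t) \<and> j \<in> set (leaf_list t) then Suc (phir t i j) else 0) ts))"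

fun comb :: "ptree list \<Rightarrow> ptree" where
  "comb [] = Node []"
| "comb [t] = t"
| "comb (t # u # us) = Node [t, comb (u # us)]"

fun bin :: "ptree \<Rightarrow> ptree" where
  "bin (Leaf k) = Leaf k"
| "bin (Node ts) = comb (map bin ts)"

lemma leaves_comb: "leaf_list (comb us) = concat (map leaf_list us)"
  by (induction us rule: comb.induct) auto

lemma leaves_bin: "leaf_list (bin T) = leaf_list T"
proof (induction T)
  case (Leaf x) then show ?case by simp
next
  case (Node ts)
  then show ?case by (simp add: leaves_comb cong: map_cong)
qed

lemma binary_comb: "us \<noteq> [] \<Longrightarrow> \<forall>u\<in>set us. binary u \<Longrightarrow> binary (comb us)"
  by (induction us rule: comb.induct) auto

lemma binary_bin: "internal_ok T \<Longrightarrow> binary (bin T)"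
proof (induction T)
  case (Leaf x) then show ?case by simp
next
  case (Node ts)
  then show ?case by (auto intro!: binary_comb)
qed

lemma binary_internal_ok: "binary T \<Longrightarrow> internal_ok T"
  by (induction T) auto

lemma leaves_nonempty: "internal_ok T \<Longrightarrow> leaf_list T \<noteq> []"
proof (induction T)
  case (Leaf x) then show ?case by simp
next
  case (Node ts)
  then obtain a where "a \<in> set ts" by (cases ts) auto
  with Node show ?case by auto
qed

lemma phir_child: assumes "t \<in> set ts" "i \<in> set (leaf_list t)" "j \<in> set (leaf_list t)"
   shows "Suc (phir t i j) \<le> phir (Node ts) i j"
proof -
  have "Suc (phir t i j) \<in> set (0 # map (\<lambda>t. if i \<in> set (leaf_list t) \<and> j \<in> set (leaf_list t) then Suc (phir t i j) else 0) ts)"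
    using assms by force
  then show ?thesis by (simp only: phir.simps) (rule Max_ge, simp)
qed

lemma phir_comb: "u \<in> set us \<Longrightarrow> 2 \<le> length us \<Longrightarrow> i \<in> set (leaf_list u) \<Longrightarrow> j \<in> set (leaf_list u)
   \<Longrightarrow> Suc (phir u i j) \<le> phir (comb us) i j"
proof (induction us rule: comb.induct)
  case 1 then show ?case by simp
next
  case (2 t) then show ?case by simp
next
  case (3 t v us)
  show ?case
  proof (cases "u = t")
    case True
    then show ?thesis using 3 by (simp only: comb.simps) (rule phir_child, auto)
  next
    case False
    then have u: "u \<in> set (v # us)" using 3 by auto
    show ?thesis
    proof (cases "us = []")
      case True
      then have "u = v" using u by simp
      then show ?thesis using 3 True by (simp only: comb.simps) (rule phir_child, auto)
    next
      case False
      then have "Suc (phir u i j) \<le> phir (comb (v # us)) i j" using 3(1)[OF u _ 3(4,5)] False by (cases us) auto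
      moreover have "Suc (phir (comb (v # us)) i j) \<le> phir (comb (t # v # us)) i j"
        using 3 u by (simp only: comb.simps) (rule phir_child, auto simp: leaves_comb)
      ultimately show ?thesis by simp
    qed
  qed
qed

lemma phir_mono: "internal_ok T \<Longrightarrow> phir T i j \<le> phir (bin T) i j"
proof (induction T)
  case (Leaf x) then show ?case by simp
next
  case (Node ts)
  have "\<forall>x \<in> set (0 # map (\<lambda>t. if i \<in> set (leaf_list t) \<and> j \<in> set (leaf_list t) then Suc (phir t i j) else 0) ts).
     x \<le> phir (bin (Node ts)) i j"
  proof
    fix x assume "x \<in> set (0 # map (\<lambda>t. if i \<in> set (leaf_list t) \<and> j \<in> set (leaf_list t) then Suc (phir t i j) else 0) ts)"
    then consider "x = 0" | t where "t \<in> set ts" "i \<in> set (leaf_list t)" "j \<in> set (leaf_list t)" "x = Suc (phir t i j)"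
      by (auto split: if_splits)
    then show "x \<le> phir (bin (Node ts)) i j"
    proof cases
      case 1 then show ?thesis by simp
    next
      case 2
      have "phir t i j \<le> phir (bin t) i j" using Node 2 by auto
      moreover have "Suc (phir (bin t) i j) \<le> phir (comb (map bin ts)) i j"
        using Node 2 by (intro phir_comb) (auto simp: leaves_bin)
      ultimately show ?thesis using 2 by simp
    qed
  qed
  then show ?case by (simp only: phir.simps) (rule Max.boundedI, auto)
qed

lemma finite_nodes: "finite (nodes T)"
  by (induction T) auto

lemma nodes_leaves: "(s, d) \<in> nodes T \<Longrightarrow> set (leaf_list s) \<subseteq> set (leaf_list T)"
proof (induction T arbitrary: s d)
  case (Leaf x) then show ?case by simp
next
  case (Node ts)
  then show ?case by fastforce
qed

lemma nodes_bound: "(s, d) \<in> nodes T \<Longrightarrow> i \<in> set (leaf_list s) \<Longrightarrow> j \<in> set (leaf_list s)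
  \<Longrightarrow> d \<le> phir T i j"
proof (induction T arbitrary: s d)
  case (Leaf x) then show ?case by simp
next
  case (Node ts)
  show ?case
  proof (cases "(s, d) = (Node ts, 0)")
    case True then show ?thesis by simp
  next
    case False
    then obtain t d' where t: "t \<in> set ts" "(s, d') \<in> nodes t" "d = Suc d'" using Node.prems by auto
    have "d' \<le> phir t i j" using Node.IH[OF t(1,2)] Node.prems by auto
    moreover have "Suc (phir t i j) \<le> phir (Node ts) i j"
      using nodes_leaves[OF t(2)] Node.prems t by (intro phir_child) auto
    ultimately show ?thesis using t by simp
  qed
qed

lemma nodes_attain: "i \<in> set (leaf_list T) \<Longrightarrow> j \<in> set (leaf_list T)
  \<Longrightarrow> \<exists>s. (s, phir T i j) \<in> nodes T \<and> i \<in> set (leaf_list s) \<and> j \<in> set (leaf_list s)"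
proof (induction T)
  case (Leaf x) then show ?case by auto
next
  case (Node ts)
  let ?A = "set (0 # map (\<lambda>t. if i \<in> set (leaf_list t) \<and> j \<in> set (leaf_list t) then Suc (phir t i j) else 0) ts)"
  have "Max ?A \<in> ?A" by (rule Max_in) auto
  then consider "Max ?A = 0" | t where "t \<in> set ts" "i \<in> set (leaf_list t)" "j \<in> set (leaf_list t)" "Max ?A = Suc (phir t i j)"
    by (auto split: if_splits)
  then show ?case
  proof cases
    case 1
    then have "phir (Node ts) i j = 0" by (simp only: phir.simps)
    then show ?thesis using Node.prems by (intro exI[of _ "Node ts"]) simp
  next
    case 2
    then have e: "phir (Node ts) i j = Suc (phir t i j)" by (simp only: phir.simps)
    obtain s where s: "(s, phir t i j) \<in> nodes t" "i \<in> set (leaf_list s)" "j \<in> set (leaf_list s)"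
      using Node.IH 2 by blast
    have "(s, Suc (phir t i j)) \<in> (\<lambda>(s, d). (s, Suc d)) ` nodes t"
      using s(1) by (rule rev_image_eqI) simp
    then have n: "(s, Suc (phir t i j)) \<in> nodes (Node ts)" using 2(1) by auto
    show ?thesis unfolding e using n s(2,3) by blast
  qed
qed

lemma phi_eq: "i \<in> set (leaf_list T) \<Longrightarrow> j \<in> set (leaf_list T) \<Longrightarrow> phi T i j = phir T i j"
  unfolding phi_def
proof (rule Max_eqI)
  show "finite {d. \<exists>s. (s, d) \<in> nodes T \<and> i \<in> set (leaf_list s) \<and> j \<in> set (leaf_list s)}"
    by (rule finite_subset[OF _ finite_imageI[OF finite_nodes, of snd T]]) force
qed (use nodes_bound nodes_attain in blast)+

lemma phir_sym: "phir T i j = phir T j i"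
proof (induction T)
  case (Leaf x) then show ?case by simp
next
  case (Node ts)
  have "map (\<lambda>t. if i \<in> set (leaf_list t) \<and> j \<in> set (leaf_list t) then Suc (phir t i j) else 0) ts
      = map (\<lambda>t. if j \<in> set (leaf_list t) \<and> i \<in> set (leaf_list t) then Suc (phir t j i) else 0) ts"
    by (rule map_cong) (auto simp: Node.IH)
  then show ?case by (simp only: phir.simps)
qed

lemma strict: "internal_ok T \<Longrightarrow> distinct (leaf_list T) \<Longrightarrow> \<not> binary T \<Longrightarrow>
  \<exists>i j. i \<noteq> j \<and> i \<in> set (leaf_list T) \<and> j \<in> set (leaf_list T) \<and> phir T i j < phir (bin T) i j"
proof (induction T)
  case (Leaf x) then show ?case by simp
next
  case (Node ts)
  show ?case
  proof (cases "length ts = 2")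
    case True
    then obtain a b where ts: "ts = [a, b]" by (cases ts rule: remdups_adj.cases) auto
    have dis: "set (leaf_list a) \<inter> set (leaf_list b) = {}" using Node.prems ts by simp
    have bt: "bin (Node ts) = Node [bin a, bin b]" using ts by simp
    from Node.prems ts have "\<not> binary a \<or> \<not> binary b" by auto
    then show ?thesis
    proof
      assume "\<not> binary a"
      then obtain i j where ij: "i \<noteq> j" "i \<in> set (leaf_list a)" "j \<in> set (leaf_list a)" "phir a i j < phir (bin a) i j"
        using Node.IH[of a] Node.prems ts by auto
      have "i \<notin> set (leaf_list b)" using dis ij by auto
      then have e: "phir (Node ts) i j = Suc (phir a i j)" using ij ts by simp
      have "Suc (phir (bin a) i j) \<le> phir (bin (Node ts)) i j"
        unfolding bt using ij by (intro phir_child) (auto simp: leaves_bin)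
      then show ?thesis using e ij ts by (intro exI[of _ i] exI[of _ j]) auto
    next
      assume "\<not> binary b"
      then obtain i j where ij: "i \<noteq> j" "i \<in> set (leaf_list b)" "j \<in> set (leaf_list b)" "phir b i j < phir (bin b) i j"
        using Node.IH[of b] Node.prems ts by auto
      have "i \<notin> set (leaf_list a)" using dis ij by auto
      then have e: "phir (Node ts) i j = Suc (phir b i j)" using ij ts by simp
      have "Suc (phir (bin b) i j) \<le> phir (bin (Node ts)) i j"
        unfolding bt using ij by (intro phir_child) (auto simp: leaves_bin)
      then show ?thesis using e ij ts by (intro exI[of _ i] exI[of _ j]) auto
    qed
  next
    case False
    with Node.prems have "3 \<le> length ts" by simp
    then obtain a b c rest where ts: "ts = a # b # c # rest"
      by (cases ts; cases "tl ts"; cases "tl (tl ts)") auto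
    have "leaf_list b \<noteq> []" "leaf_list c \<noteq> []"
      using leaves_nonempty[of b] leaves_nonempty[of c] Node.prems ts by auto
    then obtain i j where i: "i \<in> set (leaf_list b)" and j: "j \<in> set (leaf_list c)"
      using hd_in_set by blast
    have d: "distinct (leaf_list a @ leaf_list b @ leaf_list c @ concat (map leaf_list rest))"
      using Node.prems ts by simp
    have no: "\<not> (i \<in> set (leaf_list t) \<and> j \<in> set (leaf_list t))" if "t \<in> set ts" for t
    proof
      assume h: "i \<in> set (leaf_list t) \<and> j \<in> set (leaf_list t)"
      have "t = a \<or> t = b \<or> t = c \<or> t \<in> set rest" using that ts by auto
      then show False
      proof (elim disjE)
        assume "t = a" then show False using d h i by auto
      next
        assume "t = b" then show False using d h j by auto
      next
        assume "t = c" then show False using d h i by auto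
      next
        assume "t \<in> set rest" then show False using d h i by auto
      qed
    qed
    have z: "phir (Node ts) i j = 0"
      by (simp only: phir.simps, rule antisym, rule Max.boundedI) (use no in auto)
    have "Suc (phir (comb (bin b # bin c # map bin rest)) i j) \<le> phir (bin (Node ts)) i j"
      using ts i j by (simp only: bin.simps list.map comb.simps) (rule phir_child, auto simp: leaves_comb leaves_bin)
    moreover have "i \<noteq> j" using d i j by auto
    ultimately show ?thesis using z i j ts by (intro exI[of _ i] exI[of _ j]) auto
  qed
qed

theorem mainTheorem5:
  fixes n :: nat and T :: ptree
  assumes "phylogenetic n T" and "\<not> binary T"
  shows "\<exists>T'. phylogenetic n T' \<and> binary T' \<and> Phi n T' > Phi n T"
proof (intro exI conjI)
  have ok: "internal_ok T" and ds: "distinct (leaf_list T)" and st: "set (leaf_list T) = {1..n}"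
    using assms(1) unfolding phylogenetic_def by auto
  show b: "binary (bin T)" using binary_bin[OF ok] .
  show "phylogenetic n (bin T)" using binary_internal_ok[OF b] ds st
    unfolding phylogenetic_def leaves_bin by auto
  let ?S = "{(i, j). 1 \<le> i \<and> i < j \<and> j \<le> n}"
  have fin: "finite ?S" by (rule finite_subset[of _ "{1..n} \<times> {1..n}"]) auto
  have eq1: "phi T i j = phir T i j" "phi (bin T) i j = phir (bin T) i j" if "(i, j) \<in> ?S" for i j
    using that st by (auto intro!: phi_eq simp: leaves_bin)
  obtain i j where ij: "i \<noteq> j" "i \<in> set (leaf_list T)" "j \<in> set (leaf_list T)" "phir T i j < phir (bin T) i j"
    using strict[OF ok ds assms(2)] by blast
  have ex: "\<exists>x\<in>?S. (\<lambda>(i, j). phi T i j) x < (\<lambda>(i, j). phi (bin T) i j) x"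
  proof (cases "i < j")
    case True
    then have "(i, j) \<in> ?S" using ij st by auto
    then show ?thesis using eq1[of i j] ij by (intro bexI[of _ "(i, j)"]) auto
  next
    case False
    then have "(j, i) \<in> ?S" using ij st by auto
    then show ?thesis using eq1[of j i] ij phir_sym[of T i j] phir_sym[of "bin T" i j]
      by (intro bexI[of _ "(j, i)"]) auto
  qed
  have le: "\<forall>x\<in>?S. (\<lambda>(i, j). phi T i j) x \<le> (\<lambda>(i, j). phi (bin T) i j) x"
    using eq1 phir_mono[OF ok] by auto
  show "Phi n (bin T) > Phi n T" unfolding Phi_def
    by (rule sum_strict_mono_ex1[OF fin le ex])
qed

end
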